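(* Let $\mathfrak{X}$ be a Bourgain–Delbaen space determined by $(\Gamma_q,i_q)_q$ and let $\Gamma'$ be a self-determined subset of $\Gamma$. Write $\{q:\Gamma'\cap\Delta_q\neq\varnothing\}=\{q_0<q_1<q_2<\cdots\}$, $\Gamma'_{q}=\Gamma'\cap\Gamma_q$, let $R$ denote restriction onto $\Gamma'$, and for each $s$ define $i'_{q_s}:\ell_\infty(\Gamma'_{q_s})\to\ell_\infty(\Gamma')$ by $i'_{q_s}(x)=R(i_{q_s}(x))$, where $x$ is identified with a vector in $\ell_\infty(\Gamma_{q_s})$ vanishing off $\Gamma'_{q_s}$. Then $(i'_{q_s})_s$ is a compatible sequence of extension operators with $\sup_s\|i'_{q_s}\|\leqslant\sup_q\|i_q\|$; hence $(\Gamma'_{q_s},i'_{q_s})_s$ defines a Bourgain–Delbaen space $\mathfrak{X}_{(\Gamma'_{q_s},i'_{q_s})_s}$.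
   Context: Bourgain–Delbaen spaces: given a strictly increasing sequence $(\Gamma_q)_q$ of non-empty finite sets with union $\Gamma$ and linear extension operators $i_q:\ell_\infty(\Gamma_q)\to\ell_\infty(\Gamma)$ ($i_q(x)|_{\Gamma_q}=x$) with $\sup_q\|i_q\|<\infty$ that are compatible (for $p<q$, $i_p=i_q\circ r_q\circ i_p$, with $r_q$ restriction onto $\Gamma_q$), set $\Delta_1=\Gamma_1$, $\Delta_{q+1}=\Gamma_{q+1}\setminus\Gamma_q$, $d_\gamma=i_q(e_\gamma)$ for $\gamma\in\Delta_q$; the Bourgain–Delbaen space $\mathfrak{X}_{(\Gamma_q,i_q)_q}$ is the closed span of $\{d_\gamma\}$ in $\ell_\infty(\Gamma)$. $e_\gamma^*$ denotes evaluation at $\gamma$ restricted to the space, $(d_\gamma^* )$ the functionals biorthogonal to $(d_\gamma)$. An infinite subset $\Gamma'\subseteq\Gamma$ is self-determined if each $d_\gamma^*$, $\gamma\in\Gamma'$, lies in the linear span of $\{e_\eta^*:\eta\in\Gamma'\}$. *)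

theory Defs
  imports Complex_Main "HOL-Library.Infinite_Set"
begin

text \<open>Elements of \<open>\<ell>\<^sub>\<infinity>(A)\<close>, for \<open>A \<subseteq> 'a\<close>, are represented as real functions on the
  ambient type that are bounded and vanish off \<open>A\<close>.\<close>

definition supported_on :: "'a set \<Rightarrow> ('a \<Rightarrow> real) \<Rightarrow> bool" where
  "supported_on A x \<longleftrightarrow> (\<forall>\<eta>. \<eta> \<notin> A \<longrightarrow> x \<eta> = 0)"

definition bdd_fun :: "('a \<Rightarrow> real) \<Rightarrow> bool" where
  "bdd_fun f \<longleftrightarrow> bdd_above (range (\<lambda>\<eta>. \<bar>f \<eta>\<bar>))"

definition supn :: "('a \<Rightarrow> real) \<Rightarrow> real" where
  "supn f = (SUP \<eta>. \<bar>f \<eta>\<bar>)"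

definition opn :: "'a set \<Rightarrow> (('a \<Rightarrow> real) \<Rightarrow> ('a \<Rightarrow> real)) \<Rightarrow> real" where
  "opn A T = Sup ((\<lambda>x. supn (T x)) ` {x. supported_on A x \<and> supn x \<le> 1})"

definition restr :: "'a set \<Rightarrow> ('a \<Rightarrow> real) \<Rightarrow> ('a \<Rightarrow> real)" where
  "restr A f = (\<lambda>\<eta>. if \<eta> \<in> A then f \<eta> else 0)"

text \<open>Bourgain--Delbaen data \<open>(\<Gamma>\<^sub>q, i\<^sub>q)\<^sub>q\<close> over the ground set \<open>G = \<Union>\<^sub>q \<Gamma>\<^sub>q\<close>
  (indexing starts at 0): strictly increasing non-empty finite sets, linear extension
  operators \<open>\<ell>\<^sub>\<infinity>(\<Gamma>\<^sub>q) \<rightarrow> \<ell>\<^sub>\<infinity>(G)\<close>, compatible, uniformly bounded in norm.\<close>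
definition BD_system :: "'a set \<Rightarrow> (nat \<Rightarrow> 'a set) \<Rightarrow> (nat \<Rightarrow> ('a \<Rightarrow> real) \<Rightarrow> ('a \<Rightarrow> real)) \<Rightarrow> bool" where
  "BD_system G Gam i \<longleftrightarrow>
     (\<forall>q. finite (Gam q) \<and> Gam q \<noteq> {}) \<and>
     (\<forall>q. Gam q \<subset> Gam (Suc q)) \<and>
     (\<Union>q. Gam q) = G \<and>
     (\<forall>q x y. supported_on (Gam q) x \<longrightarrow> supported_on (Gam q) y \<longrightarrow>
        i q (\<lambda>\<eta>. x \<eta> + y \<eta>) = (\<lambda>\<eta>. i q x \<eta> + i q y \<eta>)) \<and>
     (\<forall>q x c. supported_on (Gam q) x \<longrightarrow> i q (\<lambda>\<eta>. c * x \<eta>) = (\<lambda>\<eta>. c * i q x \<eta>)) \<and>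
     (\<forall>q x. supported_on (Gam q) x \<longrightarrow>
        supported_on G (i q x) \<and> bdd_fun (i q x) \<and> (\<forall>\<eta>\<in>Gam q. i q x \<eta> = x \<eta>)) \<and>
     (\<forall>p q x. p < q \<longrightarrow> supported_on (Gam p) x \<longrightarrow> i p x = i q (restr (Gam q) (i p x))) \<and>
     bdd_above (range (\<lambda>q. opn (Gam q) (i q)))"

definition Delta :: "(nat \<Rightarrow> 'a set) \<Rightarrow> nat \<Rightarrow> 'a set" where
  "Delta Gam q = (if q = 0 then Gam 0 else Gam q - Gam (q - 1))"

definition unitv :: "'a \<Rightarrow> ('a \<Rightarrow> real)" where
  "unitv \<gamma> = (\<lambda>\<eta>. if \<eta> = \<gamma> then 1 else 0)"

definition dvec :: "(nat \<Rightarrow> 'a set) \<Rightarrow> (nat \<Rightarrow> ('a \<Rightarrow> real) \<Rightarrow> ('a \<Rightarrow> real)) \<Rightarrow> 'a \<Rightarrow> ('a \<Rightarrow> real)" where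
  "dvec Gam i \<gamma> = i (THE q. \<gamma> \<in> Delta Gam q) (unitv \<gamma>)"

text \<open>The Bourgain--Delbaen space: closed linear span of the \<open>d\<^sub>\<gamma>\<close> in \<open>\<ell>\<^sub>\<infinity>(G)\<close>.\<close>
definition BD_space :: "'a set \<Rightarrow> (nat \<Rightarrow> 'a set) \<Rightarrow> (nat \<Rightarrow> ('a \<Rightarrow> real) \<Rightarrow> ('a \<Rightarrow> real)) \<Rightarrow> ('a \<Rightarrow> real) set" where
  "BD_space G Gam i = {f. supported_on G f \<and> bdd_fun f \<and>
     (\<forall>\<epsilon>>0. \<exists>F c. finite F \<and> F \<subseteq> G \<and>
        (\<forall>\<eta>. \<bar>f \<eta> - (\<Sum>\<gamma>\<in>F. c \<gamma> * dvec Gam i \<gamma> \<eta>)\<bar> \<le> \<epsilon>))}"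

text \<open>\<open>d\<^sup>*\<^sub>\<gamma>\<close>: the bounded linear functional on the space biorthogonal to \<open>(d\<^sub>\<delta>)\<close>
  (it is unique since the span of the \<open>d\<^sub>\<delta>\<close> is dense).\<close>
definition dstar :: "'a set \<Rightarrow> (nat \<Rightarrow> 'a set) \<Rightarrow> (nat \<Rightarrow> ('a \<Rightarrow> real) \<Rightarrow> ('a \<Rightarrow> real)) \<Rightarrow> 'a \<Rightarrow> (('a \<Rightarrow> real) \<Rightarrow> real)" where
  "dstar G Gam i \<gamma> = (SOME \<phi>.
     (\<forall>x\<in>BD_space G Gam i. \<forall>y\<in>BD_space G Gam i. \<phi> (\<lambda>\<eta>. x \<eta> + y \<eta>) = \<phi> x + \<phi> y) \<and>
     (\<forall>x\<in>BD_space G Gam i. \<forall>c. \<phi> (\<lambda>\<eta>. c * x \<eta>) = c * \<phi> x) \<and>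
     (\<exists>K. \<forall>x\<in>BD_space G Gam i. \<bar>\<phi> x\<bar> \<le> K * supn x) \<and>
     (\<forall>\<delta>\<in>G. \<phi> (dvec Gam i \<delta>) = (if \<delta> = \<gamma> then 1 else 0)))"

definition self_determined :: "'a set \<Rightarrow> (nat \<Rightarrow> 'a set) \<Rightarrow> (nat \<Rightarrow> ('a \<Rightarrow> real) \<Rightarrow> ('a \<Rightarrow> real)) \<Rightarrow> 'a set \<Rightarrow> bool" where
  "self_determined G Gam i G' \<longleftrightarrow> G' \<subseteq> G \<and> infinite G' \<and>
     (\<forall>\<gamma>\<in>G'. \<exists>F c. finite F \<and> F \<subseteq> G' \<and>
        (\<forall>x\<in>BD_space G Gam i. dstar G Gam i \<gamma> x = (\<Sum>\<eta>\<in>F. c \<eta> * x \<eta>)))"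

end

theory Submission
  imports Defs
begin

locale bd =
  fixes G :: "'a set" and Gam :: "nat \<Rightarrow> 'a set" and i :: "nat \<Rightarrow> ('a \<Rightarrow> real) \<Rightarrow> ('a \<Rightarrow> real)"
  assumes sys: "BD_system G Gam i"
begin

lemmas sysC = sys[unfolded BD_system_def]
lemmas sysC1 = conjunct1[OF sysC] and sysR1 = conjunct2[OF sysC]
lemmas sysC2 = conjunct1[OF sysR1] and sysR2 = conjunct2[OF sysR1]
lemmas sysC3 = conjunct1[OF sysR2] and sysR3 = conjunct2[OF sysR2]
lemmas sysC4 = conjunct1[OF sysR3] and sysR4 = conjunct2[OF sysR3]
lemmas sysC5 = conjunct1[OF sysR4] and sysR5 = conjunct2[OF sysR4]
lemmas sysC6 = conjunct1[OF sysR5] and sysR6 = conjunct2[OF sysR5]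
lemmas sysC7 = conjunct1[OF sysR6] and sysC8 = conjunct2[OF sysR6]
lemmas sysD = sysC1 sysC2 sysC3 sysC4 sysC5 sysC6 sysC7 sysC8

lemma fin: "finite (Gam q)" using sysD(1) by simp
lemma sub: "Gam q \<subset> Gam (Suc q)" using sysD(2) by simp
lemma U: "(\<Union>q. Gam q) = G" using sysD(3) .
lemma iadd: "supported_on (Gam q) x \<Longrightarrow> supported_on (Gam q) y \<Longrightarrow>
        i q (\<lambda>\<eta>. x \<eta> + y \<eta>) = (\<lambda>\<eta>. i q x \<eta> + i q y \<eta>)" using sysD(4) by simp
lemma ismul: "supported_on (Gam q) x \<Longrightarrow> i q (\<lambda>\<eta>. c * x \<eta>) = (\<lambda>\<eta>. c * i q x \<eta>)"
  using sysD(5) by simp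
lemma iext: "supported_on (Gam q) x \<Longrightarrow>
        supported_on G (i q x) \<and> bdd_fun (i q x) \<and> (\<forall>\<eta>\<in>Gam q. i q x \<eta> = x \<eta>)"
  using sysD(6) by simp
lemma icompat: "p < q \<Longrightarrow> supported_on (Gam p) x \<Longrightarrow> i p x = i q (restr (Gam q) (i p x))"
  using sysD(7) by simp
lemma ibdd: "bdd_above (range (\<lambda>q. opn (Gam q) (i q)))"
  using sysD(8) .

lemma mono: "p \<le> q \<Longrightarrow> Gam p \<subseteq> Gam q"
  using lift_Suc_mono_le[of Gam, OF _ ] sub by (metis psubset_imp_subset)

lemma GamG: "Gam q \<subseteq> G" using U by blast

definition lvl :: "'a \<Rightarrow> nat" where "lvl x = (LEAST q. x \<in> Gam q)"

lemma lvl_in: "x \<in> G \<Longrightarrow> x \<in> Gam (lvl x)"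
  unfolding lvl_def using U by (metis (mono_tags, lifting) LeastI_ex UN_iff)

lemma in_Gam_iff: "x \<in> G \<Longrightarrow> x \<in> Gam q \<longleftrightarrow> lvl x \<le> q"
  using lvl_in mono unfolding lvl_def by (meson Least_le subsetD)

lemma Delta_iff: "x \<in> Delta Gam q \<longleftrightarrow> x \<in> G \<and> lvl x = q"
proof
  assume a: "x \<in> Delta Gam q"
  then have x: "x \<in> Gam q" unfolding Delta_def by (auto split: if_splits)
  then have xG: "x \<in> G" using subsetD[OF GamG] by blast
  have "lvl x \<le> q" using x in_Gam_iff xG by blast
  moreover have "\<not> lvl x \<le> q - 1" if "q > 0"
    using a that in_Gam_iff[OF xG, of "q-1"] unfolding Delta_def by auto
  ultimately show "x \<in> G \<and> lvl x = q" using xG by (cases "q = 0") auto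
next
  assume "x \<in> G \<and> lvl x = q"
  then show "x \<in> Delta Gam q" unfolding Delta_def
    using in_Gam_iff[of x q] in_Gam_iff[of x "q-1"] by auto
qed

lemma dvec_eq: "\<delta> \<in> G \<Longrightarrow> dvec Gam i \<delta> = i (lvl \<delta>) (unitv \<delta>)"
  unfolding dvec_def using Delta_iff by (metis (mono_tags, lifting) the_equality)

lemma supp_unitv: "\<delta> \<in> A \<Longrightarrow> supported_on A (unitv \<delta>)"
  unfolding supported_on_def unitv_def by auto

lemma D1: "\<delta> \<in> G \<Longrightarrow> \<zeta> \<in> Gam (lvl \<delta>) \<Longrightarrow> dvec Gam i \<delta> \<zeta> = unitv \<delta> \<zeta>"
  using dvec_eq iext supp_unitv lvl_in by metis

lemma P1: "\<delta> \<in> G \<Longrightarrow> dvec Gam i \<delta> \<delta> = 1"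
  using D1 lvl_in unfolding unitv_def by auto

lemma P2: "\<zeta> \<in> G \<Longrightarrow> \<delta> \<in> G \<Longrightarrow> \<zeta> \<noteq> \<delta> \<Longrightarrow> lvl \<zeta> \<le> lvl \<delta> \<Longrightarrow> dvec Gam i \<delta> \<zeta> = 0"
  using D1 in_Gam_iff unfolding unitv_def by auto

lemma izero: "i q (\<lambda>_. 0) = (\<lambda>_. 0)"
proof -
  have "supported_on (Gam q) (\<lambda>_. 0)" unfolding supported_on_def by auto
  from ismul[OF this, of 0] show ?thesis by simp
qed

lemma isum_aux: "finite A \<Longrightarrow> A \<subseteq> Gam q \<Longrightarrow>
   i q (\<lambda>\<eta>. \<Sum>\<zeta>\<in>A. x \<zeta> * unitv \<zeta> \<eta>) = (\<lambda>\<eta>. \<Sum>\<zeta>\<in>A. x \<zeta> * i q (unitv \<zeta>) \<eta>)"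
proof (induction A rule: finite_induct)
  case empty
  then show ?case using izero by simp
next
  case (insert a A)
  have s1: "supported_on (Gam q) (\<lambda>\<eta>. x a * unitv a \<eta>)"
    using insert.prems unfolding supported_on_def unitv_def by auto
  have s2: "supported_on (Gam q) (\<lambda>\<eta>. \<Sum>\<zeta>\<in>A. x \<zeta> * unitv \<zeta> \<eta>)"
    using insert.prems unfolding supported_on_def unitv_def by (auto intro!: sum.neutral)
  have "i q (\<lambda>\<eta>. \<Sum>\<zeta>\<in>insert a A. x \<zeta> * unitv \<zeta> \<eta>)
      = i q (\<lambda>\<eta>. x a * unitv a \<eta> + (\<Sum>\<zeta>\<in>A. x \<zeta> * unitv \<zeta> \<eta>))"
    using insert by simp
  also have "\<dots> = (\<lambda>\<eta>. i q (\<lambda>\<eta>. x a * unitv a \<eta>) \<eta> + i q (\<lambda>\<eta>. \<Sum>\<zeta>\<in>A. x \<zeta> * unitv \<zeta> \<eta>) \<eta>)"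
    using iadd[OF s1 s2] .
  also have "\<dots> = (\<lambda>\<eta>. \<Sum>\<zeta>\<in>insert a A. x \<zeta> * i q (unitv \<zeta>) \<eta>)"
  proof -
    have "a \<in> Gam q" using insert.prems by simp
    then have e1: "i q (\<lambda>\<eta>. x a * unitv a \<eta>) = (\<lambda>\<eta>. x a * i q (unitv a) \<eta>)"
      by (rule ismul[OF supp_unitv])
    have ih: "i q (\<lambda>\<eta>. \<Sum>\<zeta>\<in>A. x \<zeta> * unitv \<zeta> \<eta>) = (\<lambda>\<eta>. \<Sum>\<zeta>\<in>A. x \<zeta> * i q (unitv \<zeta>) \<eta>)"
      using insert.IH insert.prems by simp
    show ?thesis unfolding e1 ih using insert.hyps by simp
  qed
  finally show ?case .
qed

lemma isum: "supported_on (Gam q) x \<Longrightarrow> i q x = (\<lambda>\<eta>. \<Sum>\<zeta>\<in>Gam q. x \<zeta> * i q (unitv \<zeta>) \<eta>)"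
proof -
  assume s: "supported_on (Gam q) x"
  have "x = (\<lambda>\<eta>. \<Sum>\<zeta>\<in>Gam q. x \<zeta> * unitv \<zeta> \<eta>)"
  proof
    fix \<eta>
    have "(\<Sum>\<zeta>\<in>Gam q. x \<zeta> * unitv \<zeta> \<eta>) = (\<Sum>\<zeta>\<in>Gam q. if \<zeta> = \<eta> then x \<eta> else 0)"
      unfolding unitv_def by (intro sum.cong) auto
    also have "\<dots> = x \<eta>" using s fin unfolding supported_on_def by (auto simp: sum.delta')
    finally show "x \<eta> = (\<Sum>\<zeta>\<in>Gam q. x \<zeta> * unitv \<zeta> \<eta>)" by simp
  qed
  then have "i q x = i q (\<lambda>\<eta>. \<Sum>\<zeta>\<in>Gam q. x \<zeta> * unitv \<zeta> \<eta>)" by simp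
  then show ?thesis using isum_aux[OF fin] by simp
qed

lemma isum_pt: "supported_on (Gam q) x \<Longrightarrow> i q x \<eta> = (\<Sum>\<zeta>\<in>Gam q. x \<zeta> * i q (unitv \<zeta>) \<eta>)"
  using fun_cong[OF isum] by simp

end

context bd begin

lemma bdd_abs: "bdd_fun x \<Longrightarrow> \<bar>x \<eta>\<bar> \<le> supn x"
  unfolding bdd_fun_def supn_def by (auto intro: cSUP_upper)

lemma dvec_space: "\<delta> \<in> G \<Longrightarrow> dvec Gam i \<delta> \<in> BD_space G Gam i"
proof -
  assume d: "\<delta> \<in> G"
  have s: "supported_on (Gam (lvl \<delta>)) (unitv \<delta>)" using supp_unitv[OF lvl_in[OF d]] .
  show ?thesis unfolding BD_space_def
  proof (intro CollectI conjI allI impI)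
    have e: "dvec Gam i \<delta> = i (lvl \<delta>) (unitv \<delta>)" using dvec_eq[OF d] .
    show "supported_on G (dvec Gam i \<delta>)" unfolding e by (rule conjunct1[OF iext[OF s]])
    show "bdd_fun (dvec Gam i \<delta>)" unfolding e by (rule conjunct1[OF conjunct2[OF iext[OF s]]])
    fix e :: real assume "e > 0"
    show "\<exists>F c. finite F \<and> F \<subseteq> G \<and>
        (\<forall>\<eta>. \<bar>dvec Gam i \<delta> \<eta> - (\<Sum>\<gamma>\<in>F. c \<gamma> * dvec Gam i \<gamma> \<eta>)\<bar> \<le> e)"
      by (rule exI[of _ "{\<delta>}"], rule exI[of _ "\<lambda>_. 1"]) (simp add: d less_imp_le[OF \<open>e > 0\<close>])
  qed
qed

lemma restr_supp: "supported_on A (restr A x)"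
  unfolding supported_on_def restr_def by auto

lemma dstar_bio:
  assumes g: "\<gamma> \<in> G" and d: "\<delta> \<in> G"
  shows "dstar G Gam i \<gamma> (dvec Gam i \<delta>) = (if \<delta> = \<gamma> then 1 else 0)"
proof -
  define s where "s = lvl \<gamma>"
  define \<phi> where "\<phi> = (\<lambda>x. x \<gamma> - (if s = 0 then 0 else i (s-1) (restr (Gam (s-1)) x) \<gamma>))"
  let ?P = "\<lambda>\<phi>. (\<forall>x\<in>BD_space G Gam i. \<forall>y\<in>BD_space G Gam i. \<phi> (\<lambda>\<eta>. x \<eta> + y \<eta>) = \<phi> x + \<phi> y) \<and>
     (\<forall>x\<in>BD_space G Gam i. \<forall>c. \<phi> (\<lambda>\<eta>. c * x \<eta>) = c * \<phi> x) \<and>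
     (\<exists>K. \<forall>x\<in>BD_space G Gam i. \<bar>\<phi> x\<bar> \<le> K * supn x) \<and>
     (\<forall>\<delta>\<in>G. \<phi> (dvec Gam i \<delta>) = (if \<delta> = \<gamma> then 1 else 0))"
  have "?P \<phi>"
  proof (intro conjI ballI allI)
    fix x y :: "'a \<Rightarrow> real"
    have "restr (Gam (s-1)) (\<lambda>\<eta>. x \<eta> + y \<eta>) = (\<lambda>\<eta>. restr (Gam (s-1)) x \<eta> + restr (Gam (s-1)) y \<eta>)"
      unfolding restr_def by auto
    then show "\<phi> (\<lambda>\<eta>. x \<eta> + y \<eta>) = \<phi> x + \<phi> y"
      unfolding \<phi>_def using iadd[OF restr_supp restr_supp] by simp
  next
    fix x :: "'a \<Rightarrow> real" and c :: real
    have "restr (Gam (s-1)) (\<lambda>\<eta>. c * x \<eta>) = (\<lambda>\<eta>. c * restr (Gam (s-1)) x \<eta>)"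
      unfolding restr_def by auto
    then show "\<phi> (\<lambda>\<eta>. c * x \<eta>) = c * \<phi> x"
      unfolding \<phi>_def using ismul[OF restr_supp] by (simp add: algebra_simps)
  next
    define K where "K = 1 + (\<Sum>\<zeta>\<in>Gam (s-1). \<bar>i (s-1) (unitv \<zeta>) \<gamma>\<bar>)"
    show "\<exists>K. \<forall>x\<in>BD_space G Gam i. \<bar>\<phi> x\<bar> \<le> K * supn x"
    proof (intro exI[of _ K] ballI)
      fix x assume "x \<in> BD_space G Gam i"
      then have b: "bdd_fun x" unfolding BD_space_def by auto
      have r: "\<bar>restr A x \<zeta>\<bar> \<le> supn x" for A \<zeta>
        using bdd_abs[OF b, of \<zeta>] bdd_abs[OF b, of \<gamma>] unfolding restr_def by auto
      have "\<bar>i (s-1) (restr (Gam (s-1)) x) \<gamma>\<bar>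
          = \<bar>\<Sum>\<zeta>\<in>Gam (s-1). restr (Gam (s-1)) x \<zeta> * i (s-1) (unitv \<zeta>) \<gamma>\<bar>"
        using isum_pt[OF restr_supp[of "Gam (s-1)" x]] by simp
      also have "\<dots> \<le> (\<Sum>\<zeta>\<in>Gam (s-1). \<bar>restr (Gam (s-1)) x \<zeta>\<bar> * \<bar>i (s-1) (unitv \<zeta>) \<gamma>\<bar>)"
        by (rule order_trans[OF sum_abs]) (simp add: abs_mult)
      also have "\<dots> \<le> (\<Sum>\<zeta>\<in>Gam (s-1). supn x * \<bar>i (s-1) (unitv \<zeta>) \<gamma>\<bar>)"
        by (intro sum_mono mult_right_mono r) auto
      finally have t: "\<bar>i (s-1) (restr (Gam (s-1)) x) \<gamma>\<bar> \<le> supn x * (K - 1)"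
        unfolding K_def by (simp add: sum_distrib_left)
      have p: "0 \<le> supn x" using bdd_abs[OF b, of \<gamma>] by linarith
      have "\<bar>\<phi> x\<bar> \<le> \<bar>x \<gamma>\<bar> + \<bar>i (s-1) (restr (Gam (s-1)) x) \<gamma>\<bar>"
        unfolding \<phi>_def by auto
      also have "\<dots> \<le> supn x + supn x * (K - 1)" using t bdd_abs[OF b, of \<gamma>] by linarith
      finally show "\<bar>\<phi> x\<bar> \<le> K * supn x" by (simp add: algebra_simps)
    qed
  next
    fix \<delta> assume d: "\<delta> \<in> G"
    define t where "t = lvl \<delta>"
    have gs: "\<gamma> \<in> Gam s" using lvl_in[OF g] unfolding s_def .
    show "\<phi> (dvec Gam i \<delta>) = (if \<delta> = \<gamma> then 1 else 0)"
    proof (cases "t \<ge> s")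
      case True
      have v: "dvec Gam i \<delta> \<gamma> = (if \<delta> = \<gamma> then 1 else 0)"
        using D1[OF d] gs mono[OF True] t_def unfolding unitv_def by auto
      have "restr (Gam (s-1)) (dvec Gam i \<delta>) = (\<lambda>_. 0)" if "s > 0"
      proof
        fix \<zeta>
        show "restr (Gam (s - 1)) (dvec Gam i \<delta>) \<zeta> = 0"
        proof (cases "\<zeta> \<in> Gam (s-1)")
          case True
          have "s - 1 \<le> t" using \<open>t \<ge> s\<close> by simp
          then have "\<zeta> \<in> Gam t" using True mono[of "s-1" t] by blast
          moreover have "\<zeta> \<noteq> \<delta>" using True in_Gam_iff[OF d, of "s-1"] that t_def \<open>t \<ge> s\<close> by auto
          ultimately show ?thesis using D1[OF d] t_def unfolding restr_def unitv_def by auto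
        qed (auto simp: restr_def)
      qed
      then show ?thesis unfolding \<phi>_def using v izero by auto
    next
      case False
      then have s0: "s > 0" and ne: "\<delta> \<noteq> \<gamma>" using t_def s_def by auto
      have ds: "supported_on (Gam t) (unitv \<delta>)" using supp_unitv[OF lvl_in[OF d]] unfolding t_def .
      have "i (s-1) (restr (Gam (s-1)) (dvec Gam i \<delta>)) = dvec Gam i \<delta>"
      proof (cases "t = s - 1")
        case True
        have "restr (Gam (s-1)) (dvec Gam i \<delta>) = unitv \<delta>"
          using D1[OF d] True t_def ds unfolding restr_def supported_on_def by auto
        then show ?thesis using dvec_eq[OF d] True t_def by simp
      next
        case False
        then have "t < s - 1" using \<open>\<not> t \<ge> s\<close> by auto
        from icompat[OF this ds] show ?thesis using dvec_eq[OF d] t_def by simp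
      qed
      then show ?thesis unfolding \<phi>_def using s0 ne by simp
    qed
  qed
  then have "?P (SOME \<phi>. ?P \<phi>)" by (rule someI[of ?P \<phi>])
  then have "?P (dstar G Gam i \<gamma>)" unfolding dstar_def .
  then have "\<forall>\<delta>\<in>G. dstar G Gam i \<gamma> (dvec Gam i \<delta>) = (if \<delta> = \<gamma> then 1 else 0)"
    by (elim conjE) assumption
  from this d show ?thesis by (rule bspec)
qed

end

context bd begin

lemma sd_rel:
  assumes sd: "self_determined G Gam i G'" and e: "\<eta> \<in> G'"
  shows "\<exists>F c. finite F \<and> F \<subseteq> G' \<and> (\<forall>\<delta>\<in>G. (\<Sum>\<zeta>\<in>F. c \<zeta> * dvec Gam i \<delta> \<zeta>) = (if \<delta> = \<eta> then 1 else 0))"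
proof -
  have sd3: "\<forall>\<gamma>\<in>G'. \<exists>F c. finite F \<and> F \<subseteq> G' \<and>
        (\<forall>x\<in>BD_space G Gam i. dstar G Gam i \<gamma> x = (\<Sum>\<eta>\<in>F. c \<eta> * x \<eta>))"
    using sd unfolding self_determined_def by (elim conjE) assumption
  have sd1: "G' \<subseteq> G" using sd unfolding self_determined_def by (elim conjE) assumption
  obtain F c where F: "finite F" "F \<subseteq> G'"
    and h: "\<forall>x\<in>BD_space G Gam i. dstar G Gam i \<eta> x = (\<Sum>\<zeta>\<in>F. c \<zeta> * x \<zeta>)"
    using bspec[OF sd3 e] by blast
  have eG: "\<eta> \<in> G" using subsetD[OF sd1 e] .
  have "\<forall>\<delta>\<in>G. (\<Sum>\<zeta>\<in>F. c \<zeta> * dvec Gam i \<delta> \<zeta>) = (if \<delta> = \<eta> then 1 else 0)"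
  proof
    fix \<delta> assume d: "\<delta> \<in> G"
    have "(\<Sum>\<zeta>\<in>F. c \<zeta> * dvec Gam i \<delta> \<zeta>) = dstar G Gam i \<eta> (dvec Gam i \<delta>)"
      using bspec[OF h dvec_space[OF d]] by simp
    also have "\<dots> = (if \<delta> = \<eta> then 1 else 0)" by (rule dstar_bio[OF eG d])
    finally show "(\<Sum>\<zeta>\<in>F. c \<zeta> * dvec Gam i \<delta> \<zeta>) = (if \<delta> = \<eta> then 1 else 0)" .
  qed
  then show ?thesis using F by blast
qed

lemma L:
  assumes sd: "self_determined G Gam i G'"
  shows "\<eta> \<in> G' \<Longrightarrow> \<delta> \<in> G \<Longrightarrow> \<delta> \<notin> G' \<Longrightarrow> dvec Gam i \<delta> \<eta> = 0"
proof (induction "lvl \<eta>" arbitrary: \<eta> \<delta> rule: less_induct)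
  case less
  have G'G: "G' \<subseteq> G" using sd unfolding self_determined_def by (elim conjE) assumption
  obtain F c where F: "finite F" "F \<subseteq> G'"
    and h: "\<forall>\<delta>\<in>G. (\<Sum>\<zeta>\<in>F. c \<zeta> * dvec Gam i \<delta> \<zeta>) = (if \<delta> = \<eta> then 1 else 0)"
    using sd_rel[OF sd less.prems(1)] by blast
  define S where "S = insert \<eta> F"
  define v where "v \<zeta> = (if \<zeta> \<in> F then c \<zeta> else 0) - (if \<zeta> = \<eta> then 1 else 0)" for \<zeta>
  have S: "finite S" "S \<subseteq> G'" "\<eta> \<in> S" using F less.prems unfolding S_def by auto
  have eq: "(\<Sum>\<zeta>\<in>S. v \<zeta> * dvec Gam i d \<zeta>) = (if d = \<eta> then 1 else 0) - dvec Gam i d \<eta>"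
    if d: "d \<in> G" for d
  proof -
    have "(\<Sum>\<zeta>\<in>S. v \<zeta> * dvec Gam i d \<zeta>) = (\<Sum>\<zeta>\<in>S. (if \<zeta> \<in> F then c \<zeta> * dvec Gam i d \<zeta> else 0))
        - (\<Sum>\<zeta>\<in>S. (if \<zeta> = \<eta> then dvec Gam i d \<zeta> else 0))"
      unfolding v_def sum_subtractf[symmetric] by (intro sum.cong) (auto simp: algebra_simps)
    also have "\<dots> = (\<Sum>\<zeta>\<in>F. c \<zeta> * dvec Gam i d \<zeta>) - dvec Gam i d \<eta>"
    proof -
      have a: "(\<Sum>\<zeta>\<in>S. (if \<zeta> \<in> F then c \<zeta> * dvec Gam i d \<zeta> else 0)) = (\<Sum>\<zeta>\<in>S \<inter> F. c \<zeta> * dvec Gam i d \<zeta>)"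
        by (rule sum.inter_restrict[OF S(1), symmetric])
      have b: "S \<inter> F = F" unfolding S_def by auto
      have c: "(\<Sum>\<zeta>\<in>S. (if \<zeta> = \<eta> then dvec Gam i d \<zeta> else 0)) = dvec Gam i d \<eta>"
        using sum.delta[OF S(1), of \<eta> "dvec Gam i d"] S(3) by simp
      show ?thesis unfolding a b c ..
    qed
    finally show ?thesis using h d by simp
  qed
  have claim: "v \<zeta> = 0 \<or> lvl \<zeta> < lvl \<eta>" if "\<zeta> \<in> S" for \<zeta>
  proof (rule ccontr)
    assume nz: "\<not> (v \<zeta> = 0 \<or> lvl \<zeta> < lvl \<eta>)"
    define T where "T = {\<zeta>\<in>S. v \<zeta> \<noteq> 0 \<and> lvl \<eta> \<le> lvl \<zeta>}"
    have T: "finite T" "T \<noteq> {}" using S nz that unfolding T_def by auto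
    define m where "m = Max (lvl ` T)"
    have "m \<in> lvl ` T" unfolding m_def using T by (intro Max_in) auto
    then obtain z0 where z0: "z0 \<in> T" "lvl z0 = m" by blast
    have le: "lvl \<zeta>' \<le> m" if "\<zeta>' \<in> T" for \<zeta>' using T that m_def by auto
    have z0G: "z0 \<in> G" using z0 S G'G T_def by auto
    have "(\<Sum>\<zeta>\<in>S. v \<zeta> * dvec Gam i z0 \<zeta>) = v z0 * dvec Gam i z0 z0 + (\<Sum>\<zeta>\<in>S - {z0}. v \<zeta> * dvec Gam i z0 \<zeta>)"
    proof -
      have "z0 \<in> S" using z0 T_def by auto
      then show ?thesis by (rule sum.remove[OF S(1)])
    qed
    also have "(\<Sum>\<zeta>\<in>S - {z0}. v \<zeta> * dvec Gam i z0 \<zeta>) = 0"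
    proof (intro sum.neutral ballI)
      fix \<zeta> assume zz: "\<zeta> \<in> S - {z0}"
      show "v \<zeta> * dvec Gam i z0 \<zeta> = 0"
      proof (cases "v \<zeta> = 0")
        case False
        then have "lvl \<zeta> \<le> lvl z0"
          using le[of \<zeta>] zz z0 T_def by (cases "lvl \<eta> \<le> lvl \<zeta>") auto
        then show ?thesis using P2[of \<zeta> z0] zz S G'G z0G by auto
      qed simp
    qed
    finally have "v z0 = (if z0 = \<eta> then 1 else 0) - dvec Gam i z0 \<eta>"
      using eq[OF z0G] P1[OF z0G] by simp
    also have "\<dots> = 0"
    proof (cases "z0 = \<eta>")
      case True then show ?thesis using P1[OF z0G] by simp
    next
      case False then show ?thesis using P2[of \<eta> z0] z0G less.prems G'G z0 T_def by auto
    qed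
    finally show False using z0 T_def by auto
  qed
  have ne: "\<delta> \<noteq> \<eta>" using less.prems by auto
  have "(\<Sum>\<zeta>\<in>S. v \<zeta> * dvec Gam i \<delta> \<zeta>) = 0"
  proof (intro sum.neutral ballI)
    fix \<zeta> assume "\<zeta> \<in> S"
    then show "v \<zeta> * dvec Gam i \<delta> \<zeta> = 0"
      using claim less.hyps[of \<zeta> \<delta>] less.prems S by auto
  qed
  then show ?case using eq[OF less.prems(2)] ne by simp
qed

lemma K:
  assumes sd: "self_determined G Gam i G'"
  shows "\<gamma> \<in> Gam Q \<Longrightarrow> \<gamma> \<notin> G' \<Longrightarrow> \<eta> \<in> G' \<Longrightarrow> i Q (unitv \<gamma>) \<eta> = 0"
proof (induction "Q - lvl \<gamma>" arbitrary: \<gamma> rule: less_induct)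
  case less
  have gG: "\<gamma> \<in> G" using subsetD[OF GamG less.prems(1)] .
  define s where "s = lvl \<gamma>"
  have sQ: "s \<le> Q" using in_Gam_iff[OF gG, of Q] less.prems(1) unfolding s_def by simp
  have Ld: "dvec Gam i \<gamma> \<eta> = 0" using L[OF sd less.prems(3) gG less.prems(2)] .
  show ?case
  proof (cases "s = Q")
    case True then show ?thesis using Ld dvec_eq[OF gG] s_def by simp
  next
    case False
    then have sQ': "s < Q" using sQ by auto
    have us: "supported_on (Gam s) (unitv \<gamma>)" using supp_unitv[OF lvl_in[OF gG]] unfolding s_def .
    have c: "dvec Gam i \<gamma> = i Q (restr (Gam Q) (dvec Gam i \<gamma>))"
      using icompat[OF sQ' us] dvec_eq[OF gG] s_def by simp
    define z' where "z' = restr (Gam Q - Gam s) (dvec Gam i \<gamma>)"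
    have gs: "\<gamma> \<in> Gam s" using lvl_in[OF gG] unfolding s_def .
    have dec: "restr (Gam Q) (dvec Gam i \<gamma>) = (\<lambda>\<zeta>. unitv \<gamma> \<zeta> + z' \<zeta>)"
    proof
      fix \<zeta>
      show "restr (Gam Q) (dvec Gam i \<gamma>) \<zeta> = unitv \<gamma> \<zeta> + z' \<zeta>"
        using D1[OF gG, of \<zeta>] mono[OF sQ] gs less.prems(1) unfolding z'_def restr_def s_def
        by (auto simp: unitv_def)
    qed
    have z's: "supported_on (Gam Q) z'" unfolding z'_def supported_on_def restr_def by auto
    have uQ: "supported_on (Gam Q) (unitv \<gamma>)" using supp_unitv[OF less.prems(1)] .
    have "i Q z' \<eta> = (\<Sum>\<zeta>\<in>Gam Q. z' \<zeta> * i Q (unitv \<zeta>) \<eta>)" by (rule isum_pt[OF z's])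
    also have "\<dots> = 0"
    proof (intro sum.neutral ballI)
      fix \<zeta> assume zQ: "\<zeta> \<in> Gam Q"
      show "z' \<zeta> * i Q (unitv \<zeta>) \<eta> = 0"
      proof (cases "\<zeta> \<in> Gam s")
        case True then show ?thesis unfolding z'_def restr_def by simp
      next
        case False
        have zG: "\<zeta> \<in> G" using subsetD[OF GamG zQ] .
        show ?thesis
        proof (cases "\<zeta> \<in> G'")
          case True
          then show ?thesis using L[OF sd True gG less.prems(2)] unfolding z'_def restr_def by simp
        next
          case nz: False
          have "lvl \<zeta> > s" using False in_Gam_iff[OF zG, of s] by auto
          moreover have "lvl \<zeta> \<le> Q" using in_Gam_iff[OF zG, of Q] zQ by simp
          ultimately have "Q - lvl \<zeta> < Q - lvl \<gamma>" using s_def sQ' by linarith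
          from less.hyps[OF this zQ nz less.prems(3)] show ?thesis by simp
        qed
      qed
    qed
    finally have "i Q z' \<eta> = 0" .
    moreover have "dvec Gam i \<gamma> \<eta> = i Q (unitv \<gamma>) \<eta> + i Q z' \<eta>"
    proof -
      have "dvec Gam i \<gamma> = (\<lambda>\<eta>. i Q (unitv \<gamma>) \<eta> + i Q z' \<eta>)"
        by (subst c, subst dec, rule iadd[OF uQ z's])
      then show ?thesis by (rule fun_cong)
    qed
    ultimately show ?thesis using Ld by simp
  qed
qed

lemma R:
  assumes sd: "self_determined G Gam i G'" and x: "supported_on (Gam Q) x"
  shows "restr G' (i Q x) = restr G' (i Q (restr G' x))"
proof
  fix \<eta>
  have xs: "supported_on (Gam Q) (restr G' x)" using x unfolding supported_on_def restr_def by auto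
  show "restr G' (i Q x) \<eta> = restr G' (i Q (restr G' x)) \<eta>"
  proof (cases "\<eta> \<in> G'")
    case True
    have "i Q x \<eta> = (\<Sum>\<zeta>\<in>Gam Q. x \<zeta> * i Q (unitv \<zeta>) \<eta>)" by (rule isum_pt[OF x])
    also have "\<dots> = (\<Sum>\<zeta>\<in>Gam Q. restr G' x \<zeta> * i Q (unitv \<zeta>) \<eta>)"
      using K[OF sd _ _ True] by (intro sum.cong) (auto simp: restr_def)
    also have "\<dots> = i Q (restr G' x) \<eta>" by (rule isum_pt[OF xs, symmetric])
    finally show ?thesis unfolding restr_def using True by simp
  qed (simp add: restr_def)
qed

end

context bd begin

lemma supn_restr:
  assumes b: "bdd_fun f" shows "supn (restr A f) \<le> supn f"
proof -
  have "\<bar>restr A f \<eta>\<bar> \<le> supn f" for \<eta>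
    using bdd_abs[OF b, of \<eta>] bdd_abs[OF b, of \<eta>] unfolding restr_def by auto
  then show ?thesis unfolding supn_def[of "restr A f"] by (intro cSUP_least) auto
qed

lemma fin_bdd: "supported_on (Gam q) x \<Longrightarrow> bdd_fun x"
proof -
  assume s: "supported_on (Gam q) x"
  have "range (\<lambda>\<eta>. \<bar>x \<eta>\<bar>) \<subseteq> insert 0 ((\<lambda>\<eta>. \<bar>x \<eta>\<bar>) ` Gam q)"
    using s unfolding supported_on_def by auto
  then show ?thesis unfolding bdd_fun_def
    using fin by (meson bdd_above_mono finite_imageI finite_insert bdd_above_finite)
qed

lemma opn_le:
  "opn (G' \<inter> Gam Q) (\<lambda>x. restr G' (i Q x)) \<le> opn (Gam Q) (i Q)"
proof -
  define M where "M = (\<Sum>\<zeta>\<in>Gam Q. supn (i Q (unitv \<zeta>)))"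
  have B: "supn (i Q x) \<le> M" if x: "supported_on (Gam Q) x" "supn x \<le> 1" for x
  proof -
    have bx: "bdd_fun x" using fin_bdd[OF x(1)] .
    show ?thesis unfolding supn_def
    proof (rule cSUP_least)
      fix \<eta>
      have "\<bar>i Q x \<eta>\<bar> = \<bar>\<Sum>\<zeta>\<in>Gam Q. x \<zeta> * i Q (unitv \<zeta>) \<eta>\<bar>" using isum_pt[OF x(1)] by simp
      also have "\<dots> \<le> (\<Sum>\<zeta>\<in>Gam Q. \<bar>x \<zeta>\<bar> * \<bar>i Q (unitv \<zeta>) \<eta>\<bar>)"
        by (rule order_trans[OF sum_abs]) (simp add: abs_mult)
      also have "\<dots> \<le> (\<Sum>\<zeta>\<in>Gam Q. 1 * supn (i Q (unitv \<zeta>)))"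
      proof (intro sum_mono mult_mono)
        fix \<zeta> assume z: "\<zeta> \<in> Gam Q"
        show "\<bar>x \<zeta>\<bar> \<le> 1" using bdd_abs[OF bx, of \<zeta>] x by linarith
        show "\<bar>i Q (unitv \<zeta>) \<eta>\<bar> \<le> supn (i Q (unitv \<zeta>))"
          by (rule bdd_abs[OF conjunct1[OF conjunct2[OF iext[OF supp_unitv[OF z]]]]])
      qed auto
      finally show "\<bar>i Q x \<eta>\<bar> \<le> M" unfolding M_def by simp
    qed simp
  qed
  show ?thesis unfolding opn_def
  proof (rule cSup_mono)
    have "supported_on (G' \<inter> Gam Q) (\<lambda>_. 0)" "supn (\<lambda>_::'a. 0::real) \<le> 1"
      unfolding supported_on_def supn_def by auto
    then show "(\<lambda>x. supn (restr G' (i Q x))) ` {x. supported_on (G' \<inter> Gam Q) x \<and> supn x \<le> 1} \<noteq> {}"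
      by blast
    show "bdd_above ((\<lambda>x. supn (i Q x)) ` {x. supported_on (Gam Q) x \<and> supn x \<le> 1})"
      using B by (auto intro!: bdd_aboveI[of _ M])
  next
    fix b assume "b \<in> (\<lambda>x. supn (restr G' (i Q x))) ` {x. supported_on (G' \<inter> Gam Q) x \<and> supn x \<le> 1}"
    then obtain x where x: "supported_on (G' \<inter> Gam Q) x" "supn x \<le> 1" and b: "b = supn (restr G' (i Q x))"
      by blast
    have xq: "supported_on (Gam Q) x" using x unfolding supported_on_def by auto
    have "b \<le> supn (i Q x)" using supn_restr[OF conjunct1[OF conjunct2[OF iext[OF xq]]]] b by simp
    then show "\<exists>a\<in>(\<lambda>x. supn (i Q x)) ` {x. supported_on (Gam Q) x \<and> supn x \<le> 1}. b \<le> a"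
      using xq x by blast
  qed
qed

end

theorem proposition1p9:
  fixes G :: "'a set" and Gam :: "nat \<Rightarrow> 'a set"
    and i :: "nat \<Rightarrow> ('a \<Rightarrow> real) \<Rightarrow> ('a \<Rightarrow> real)" and G' :: "'a set"
  assumes "BD_system G Gam i"
    and "self_determined G Gam i G'"
  defines "qs \<equiv> enumerate {q. G' \<inter> Delta Gam q \<noteq> {}}"
  defines "Gam' \<equiv> (\<lambda>s. G' \<inter> Gam (qs s))"
  defines "i' \<equiv> (\<lambda>s x. restr G' (i (qs s) x))"
  shows "BD_system G' Gam' i' \<and>
         (SUP s. opn (Gam' s) (i' s)) \<le> (SUP q. opn (Gam q) (i q))"
proof -
  interpret bd G Gam i by standard (rule assms(1))
  note sd = assms(2)
  have G'G: "G' \<subseteq> G" using sd unfolding self_determined_def by (elim conjE) assumption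
  have infG': "infinite G'" using sd unfolding self_determined_def by (elim conjE) assumption
  define S where "S = {q. G' \<inter> Delta Gam q \<noteq> {}}"
  have lvlS: "lvl \<eta> \<in> S" if "\<eta> \<in> G'" for \<eta> using Delta_iff[of \<eta> "lvl \<eta>"] that G'G unfolding S_def by auto
  have infS: "infinite S"
  proof
    assume fS: "finite S"
    have "G' \<subseteq> (\<Union>q\<in>S. Gam q)" using lvlS lvl_in G'G by blast
    then have "finite G'" using fS fin by (meson finite_UN_I finite_subset)
    then show False using infG' by blast
  qed
  have qsS: "qs s \<in> S" for s unfolding qs_def S_def[symmetric] using enumerate_in_set[OF infS] .
  have qsm: "qs s < qs t" if "s < t" for s t unfolding qs_def S_def[symmetric] by (rule enumerate_mono[OF that infS])
  have qsle: "s \<le> qs s" for s unfolding qs_def S_def[symmetric] using le_enumerate[OF infS] .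
  have witness: "\<exists>\<eta>\<in>G'. lvl \<eta> = qs s" for s using qsS[of s] unfolding S_def by (auto simp: Delta_iff)
  define M where "M = (SUP q. opn (Gam q) (i q))"
  have opnle: "opn (Gam' s) (i' s) \<le> M" for s
  proof -
    have "opn (Gam' s) (i' s) \<le> opn (Gam (qs s)) (i (qs s))"
      unfolding Gam'_def i'_def using opn_le .
    also have "\<dots> \<le> M" unfolding M_def by (rule cSUP_upper[OF _ ibdd]) simp
    finally show ?thesis .
  qed
  have sys: "BD_system G' Gam' i'"
    unfolding BD_system_def
  proof (intro conjI allI impI)
    fix q
    show "finite (Gam' q)" unfolding Gam'_def by (rule finite_Int[OF disjI2[OF fin]])
    obtain \<eta>0 where e0: "\<eta>0 \<in> G'" "lvl \<eta>0 = qs q" using witness[of q] by blast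
    have "\<eta>0 \<in> Gam (qs q)" using lvl_in[OF subsetD[OF G'G e0(1)]] e0(2) by simp
    then show "Gam' q \<noteq> {}" using e0(1) unfolding Gam'_def by blast
    obtain \<eta> where e: "\<eta> \<in> G'" "lvl \<eta> = qs (Suc q)" using witness[of "Suc q"] by blast
    have eG: "\<eta> \<in> G" using subsetD[OF G'G e(1)] .
    have lt: "qs q < qs (Suc q)" using qsm[of q "Suc q"] by simp
    have "\<eta> \<notin> Gam (qs q)" using in_Gam_iff[OF eG, of "qs q"] e(2) lt by simp
    moreover have "\<eta> \<in> Gam' (Suc q)" using lvl_in[OF eG] e unfolding Gam'_def by simp
    moreover have "Gam' q \<subseteq> Gam' (Suc q)" unfolding Gam'_def using mono[OF less_imp_le[OF lt]] by blast
    ultimately show "Gam' q \<subset> Gam' (Suc q)" unfolding Gam'_def by blast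
  next
    show "(\<Union>q. Gam' q) = G'"
    proof
      show "(\<Union>q. Gam' q) \<subseteq> G'" unfolding Gam'_def by auto
      show "G' \<subseteq> (\<Union>q. Gam' q)"
      proof
        fix \<eta> assume e: "\<eta> \<in> G'"
        then have "\<eta> \<in> Gam (qs (lvl \<eta>))" using lvl_in[of \<eta>] mono[OF qsle[of "lvl \<eta>"]] G'G e by blast
        then show "\<eta> \<in> (\<Union>q. Gam' q)" using e unfolding Gam'_def by blast
      qed
    qed
  next
    fix q x y assume x: "supported_on (Gam' q) x" and y: "supported_on (Gam' q) y"
    have "supported_on (Gam (qs q)) x" "supported_on (Gam (qs q)) y"
      using x y unfolding supported_on_def Gam'_def by auto
    from iadd[OF this] show "i' q (\<lambda>\<eta>. x \<eta> + y \<eta>) = (\<lambda>\<eta>. i' q x \<eta> + i' q y \<eta>)"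
      unfolding i'_def restr_def by auto
  next
    fix q x c assume x: "supported_on (Gam' q) x"
    have "supported_on (Gam (qs q)) x" using x unfolding supported_on_def Gam'_def by auto
    from ismul[OF this] show "i' q (\<lambda>\<eta>. c * x \<eta>) = (\<lambda>\<eta>. c * i' q x \<eta>)"
      unfolding i'_def restr_def by auto
  next
    fix q x assume x: "supported_on (Gam' q) x"
    have xq: "supported_on (Gam (qs q)) x" using x unfolding supported_on_def Gam'_def by auto
    have hc: "supported_on G' (i' q x) \<and> bdd_fun (i' q x) \<and> (\<forall>\<eta>\<in>Gam' q. i' q x \<eta> = x \<eta>)"
    proof (intro conjI ballI)
      show "supported_on G' (i' q x)" unfolding i'_def by (rule restr_supp)
      show "bdd_fun (i' q x)"
      proof -
        have "bdd_fun (i (qs q) x)" using conjunct1[OF conjunct2[OF iext[OF xq]]] .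
        then obtain B where B: "\<And>\<eta>. \<bar>i (qs q) x \<eta>\<bar> \<le> B" unfolding bdd_fun_def bdd_above_def by auto
        have B0: "0 \<le> B" using B[of undefined] abs_ge_zero order_trans by blast
        show ?thesis unfolding i'_def bdd_fun_def restr_def
          using B B0 by (auto intro!: bdd_aboveI[of _ B])
      qed
      fix \<eta> assume "\<eta> \<in> Gam' q"
      then show "i' q x \<eta> = x \<eta>" using iext[OF xq] unfolding i'_def restr_def Gam'_def by auto
    qed
    from hc show "supported_on G' (i' q x)" by (rule conjunct1)
    from hc show "bdd_fun (i' q x)" by (elim conjE)
    from hc show "\<forall>\<eta>\<in>Gam' q. i' q x \<eta> = x \<eta>" by (elim conjE)
  next
    fix p q x assume pq: "p < q" and x: "supported_on (Gam' p) x"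
    have xp: "supported_on (Gam (qs p)) x" using x unfolding supported_on_def Gam'_def by auto
    have c: "i (qs p) x = i (qs q) (restr (Gam (qs q)) (i (qs p) x))"
      using icompat[OF qsm[OF pq] xp] .
    have r: "restr (Gam' q) (i' p x) = restr G' (restr (Gam (qs q)) (i (qs p) x))"
      unfolding Gam'_def i'_def restr_def by auto
    show "i' p x = i' q (restr (Gam' q) (i' p x))"
      unfolding r unfolding i'_def
      by (rule trans[OF arg_cong[where f="restr G'", OF c] R[OF sd restr_supp[of "Gam (qs q)" "i (qs p) x"]]])
  next
    show "bdd_above (range (\<lambda>q. opn (Gam' q) (i' q)))" using opnle by (auto intro!: bdd_aboveI)
  qed
  moreover have "(SUP s. opn (Gam' s) (i' s)) \<le> M" by (rule cSUP_least) (auto intro: opnle)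
  ultimately show ?thesis unfolding M_def by (rule conjI)
qed

end
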